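(* Let $pu$, $uv$, and $vq$ be three edges of a Euclidean minimum spanning tree of a finite point set in the plane such that $p$ and $q$ lie on the same side of the line through $u$ and $v$. Let $\alpha=\angle puv$ and $\gamma=\angle uvq$ denote the convex angles at $u$ and $v$, respectively. If $\alpha+\gamma\leqslant 210^\circ$, then $|pq|\leqslant\sqrt{3}\cdot\max\{|pu|,|uv|,|vq|\}$.
   Context: $|xy|$ denotes the Euclidean distance between points $x$ and $y$; angles are measured in degrees. *)

theory Defs
  imports "HOL-Analysis.Analysis"
begin

type_synonym pt = "real^2"

definition adj :: "pt set set \<Rightarrow> pt \<Rightarrow> pt \<Rightarrow> bool" where
  "adj E x y \<longleftrightarrow> {x, y} \<in> E"

definition graph_connected_on :: "pt set \<Rightarrow> pt set set \<Rightarrow> bool" where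
  "graph_connected_on P E \<longleftrightarrow> (\<forall>x\<in>P. \<forall>y\<in>P. (adj E)\<^sup>*\<^sup>* x y)"

definition has_cycle :: "pt set set \<Rightarrow> bool" where
  "has_cycle E \<longleftrightarrow> (\<exists>vs. length vs \<ge> 3 \<and> distinct vs \<and>
      (\<forall>i < length vs. {vs ! i, vs ! ((i + 1) mod length vs)} \<in> E))"

definition is_spanning_tree :: "pt set \<Rightarrow> pt set set \<Rightarrow> bool" where
  "is_spanning_tree P E \<longleftrightarrow>
     E \<subseteq> {{a, b} | a b. a \<in> P \<and> b \<in> P \<and> a \<noteq> b} \<and>
     graph_connected_on P E \<and> \<not> has_cycle E"

definition edge_len :: "pt set \<Rightarrow> real" where
  "edge_len e = (SOME d. \<exists>a b. e = {a, b} \<and> d = dist a b)"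

definition tree_weight :: "pt set set \<Rightarrow> real" where
  "tree_weight E = (\<Sum>e\<in>E. edge_len e)"

definition is_EMST :: "pt set \<Rightarrow> pt set set \<Rightarrow> bool" where
  "is_EMST P T \<longleftrightarrow> is_spanning_tree P T \<and>
     (\<forall>T'. is_spanning_tree P T' \<longrightarrow> tree_weight T \<le> tree_weight T')"

definition cross2 :: "pt \<Rightarrow> pt \<Rightarrow> real" where
  "cross2 a b = a $ 1 * b $ 2 - a $ 2 * b $ 1"

definition same_side :: "pt \<Rightarrow> pt \<Rightarrow> pt \<Rightarrow> pt \<Rightarrow> bool" where
  "same_side u v p q \<longleftrightarrow> cross2 (v - u) (p - u) * cross2 (v - u) (q - u) > 0"

definition angle_deg :: "pt \<Rightarrow> pt \<Rightarrow> pt \<Rightarrow> real" where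
  "angle_deg a b c = arccos (((a - b) \<bullet> (c - b)) / (norm (a - b) * norm (c - b))) * 180 / pi"

end

theory Submission
  imports Defs
begin

lemma sq_convex:
  fixes P0 P1 Q0 Q1 K l h t :: real
  assumes "l \<le> t" "t \<le> h"
    and "(P0 + l*P1)^2 + (Q0 + l*Q1)^2 \<le> K"
    and "(P0 + h*P1)^2 + (Q0 + h*Q1)^2 \<le> K"
  shows "(P0 + t*P1)^2 + (Q0 + t*Q1)^2 \<le> K"
proof (cases "l = h")
  case True then show ?thesis using assms by auto
next
  case False
  then have hl: "h - l > 0" using assms by auto
  define g where "g x = (P0 + x*P1)^2 + (Q0 + x*Q1)^2" for x
  have id: "(h - l) * g t = (h - t) * g l + (t - l) * g h + (P1^2+Q1^2)*(t-l)*(t-h)*(h-l)"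
    unfolding g_def by (simp add: algebra_simps power2_eq_square)
  have "(P1^2+Q1^2)*(t-l)*(t-h)*(h-l) \<le> 0"
  proof -
    have "(P1^2+Q1^2)*(t-l) \<ge> 0" using assms by auto
    moreover have "(t-h)*(h-l) \<le> 0" using assms hl by (simp add: mult_nonpos_nonneg)
    ultimately show ?thesis by (metis mult.assoc mult_nonneg_nonpos)
  qed
  moreover have "(h - t) * g l \<le> (h - t) * K" using assms by (intro mult_left_mono) (auto simp: g_def)
  moreover have "(t - l) * g h \<le> (t - l) * K" using assms by (intro mult_left_mono) (auto simp: g_def)
  ultimately have "(h - l) * g t \<le> (h - l) * K" using id by (simp add: algebra_simps)
  then have "g t \<le> K" using hl by simp
  then show ?thesis by (simp add: g_def)
qed

lemma sqrt3_ge: "sqrt 3 \<ge> (3/2::real)*(2/3)" and sqrt3_bounds: "1 \<le> sqrt (3::real)" "sqrt (3::real) \<le> 2"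
  by (auto simp: real_le_rsqrt real_sqrt_le_iff) (smt (verit) real_sqrt_le_mono real_sqrt_four)

lemma sqrt3_sq: "sqrt (3::real) * sqrt 3 = 3" by simp

lemma m_ge: fixes k m :: real assumes "k^2 + m^2 = 1" "m \<ge> 0" "k^2 \<le> 1/4"
  shows "m \<ge> sqrt 3 / 2"
proof -
  have "(sqrt 3 / 2)^2 \<le> m^2" using assms by (simp add: power_divide)
  then show ?thesis using assms(2) by (rule power2_le_imp_le)
qed

lemma m_le1: fixes k m :: real assumes "k^2 + m^2 = 1" shows "m \<le> 1" "k \<le> 1" "-1 \<le> k" "-1 \<le> m"
proof -
  have "m^2 \<le> 1" "k^2 \<le> 1" using assms zero_le_power2[of k] zero_le_power2[of m] by linarith+
  then have "\<bar>m\<bar> \<le> 1" "\<bar>k\<bar> \<le> 1" using abs_le_square_iff[of m 1] abs_le_square_iff[of k 1] by simp_all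
  then show "m \<le> 1" "k \<le> 1" "-1 \<le> k" "-1 \<le> m" by auto
qed

lemma caseA:
  fixes d a c k1 m1 k2 m2 :: real
  assumes d: "0 \<le> d" "d \<le> 1" and a: "0 \<le> a" "a \<le> 1" and c: "0 \<le> c" "c \<le> 1"
    and n1: "k1^2 + m1^2 = 1" and n2: "k2^2 + m2^2 = 1" and m: "m1 \<ge> 0" "m2 \<ge> 0"
    and F1: "2*k1 - sqrt 3*k2 + m2 \<ge> 0" and F2: "-2*k2 + sqrt 3*k1 + m1 \<ge> 0"
    and k: "k1 \<le> 0" "k2 \<ge> 0"
  shows "(d + c*k2 - a*k1)^2 + (c*m2 - a*m1)^2 \<le> 3"
proof -
  have s3: "1 \<le> sqrt (3::real)" "sqrt (3::real) \<le> 2" by (rule sqrt3_bounds)+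
  have m1le: "m1 \<le> 1" and m2le: "m2 \<le> 1" using m_le1 n1 n2 by auto
  have "sqrt 3 * k1 \<le> 0" using k s3 by (simp add: mult_nonneg_nonpos)
  then have k2h: "k2 \<le> 1/2" using F2 m1le by linarith
  have "sqrt 3 * k2 \<ge> 0" using k s3 by simp
  then have k1h: "-k1 \<le> 1/2" using F1 m2le by linarith
  have "k1^2 \<le> 1/4"
  proof -
    have "(-k1)^2 \<le> (1/2)^2" using k1h k by (intro power_mono) auto
    then show ?thesis by (simp add: power2_eq_square)
  qed
  then have m1g: "m1 \<ge> sqrt 3 / 2" using m_ge n1 m by blast
  have key: "-k1 + k2 - k1*k2 \<le> m1*m2"
  proof -
    have "m1*m2 \<ge> (sqrt 3/2)*m2" using m1g m by (intro mult_right_mono) auto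
    moreover have "(sqrt 3/2)*m2 \<ge> (sqrt 3/2)*(-2*k1 + sqrt 3*k2)" using F1 by (intro mult_left_mono) auto
    moreover have "(sqrt 3/2)*(-2*k1 + sqrt 3*k2) = sqrt 3 * (-k1) + (3/2)*k2"
      by (simp add: algebra_simps)
    moreover have "(-k1)*k2 \<le> (1/2)*k2" using k1h k by (intro mult_right_mono) auto
    moreover have "sqrt 3 * (-k1) \<ge> 1 * (-k1)" using s3 k by (intro mult_right_mono) auto
    ultimately show ?thesis by (simp add: algebra_simps)
  qed
  have "a*k1 \<le> 0" "c*k2 \<ge> 0" using a c k by (simp_all add: mult_nonneg_nonpos)
  then have h0: "0 \<le> d + c*k2 - a*k1" using d by linarith
  have h1: "(d + c*k2 - a*k1)^2 \<le> (1 + c*k2 - a*k1)^2" using h0 d by (intro power_mono) auto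
  have E0: "((1 + c*k2) + 0*(-k1))^2 + ((c*m2) + 0*(-m1))^2 \<le> 3"
  proof -
    have "(1 + c*k2)^2 + (0 + c*m2)^2 \<le> 3"
    proof (rule sq_convex[where l=0 and h=1])
      show "(1 + 0 * k2)\<^sup>2 + (0 + 0 * m2)\<^sup>2 \<le> 3" by simp
      have "(1 + 1 * k2)\<^sup>2 + (0 + 1 * m2)\<^sup>2 = 2 + 2*k2" using n2 by (simp add: power2_eq_square algebra_simps) 
      then show "(1 + 1 * k2)\<^sup>2 + (0 + 1 * m2)\<^sup>2 \<le> 3" using k2h by simp
    qed (use c in auto)
    then show ?thesis by simp
  qed
  have E1: "((1 + c*k2) + 1*(-k1))^2 + ((c*m2) + 1*(-m1))^2 \<le> 3"
  proof -
    have "((1 - k1) + c*k2)^2 + ((-m1) + c*m2)^2 \<le> 3"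
    proof (rule sq_convex[where l=0 and h=1])
      have "((1 - k1) + 0 * k2)\<^sup>2 + ((-m1) + 0 * m2)\<^sup>2 = 2 - 2*k1" using n1 by (simp add: power2_eq_square algebra_simps) 
      then show "((1 - k1) + 0 * k2)\<^sup>2 + ((-m1) + 0 * m2)\<^sup>2 \<le> 3" using k1h by simp
      have "((1 - k1) + 1 * k2)\<^sup>2 + ((-m1) + 1 * m2)\<^sup>2 = 3 + 2*(-k1 + k2 - k1*k2 - m1*m2)"
        using n1 n2 by (simp add: power2_eq_square algebra_simps) 
      then show "((1 - k1) + 1 * k2)\<^sup>2 + ((-m1) + 1 * m2)\<^sup>2 \<le> 3" using key by simp
    qed (use c in auto)
    then show ?thesis by (simp add: algebra_simps)
  qed
  have "((1 + c*k2) + a*(-k1))^2 + ((c*m2) + a*(-m1))^2 \<le> 3"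
    by (rule sq_convex[where l=0 and h=1, OF _ _ E0 E1]) (use a in auto)
  then have "(1 + c*k2 - a*k1)^2 + (c*m2 - a*m1)^2 \<le> 3" by (simp add: algebra_simps)
  then show ?thesis using h1 by linarith
qed

lemma sq_le1: fixes x :: real assumes "0 \<le> x" "x \<le> 1" shows "x^2 \<le> 1"
  using assms by (simp add: power_le_one)

lemma caseB:
  fixes d a c k1 m1 k2 m2 :: real
  assumes d: "0 \<le> d" "d \<le> 1" and a: "0 \<le> a" "a \<le> 1" and c: "0 \<le> c" "c \<le> 1"
    and n1: "k1^2 + m1^2 = 1" and n2: "k2^2 + m2^2 = 1" and m: "m1 \<ge> 0" "m2 \<ge> 0"
    and e1: "2*a*k1 \<le> d" and e2: "-2*c*k2 \<le> d"
    and k: "k1 \<ge> 0" "k2 \<le> 0"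
  shows "(d + c*k2 - a*k1)^2 + (c*m2 - a*m1)^2 \<le> 3"
proof -
  have m1le: "m1 \<le> 1" and m2le: "m2 \<le> 1" using m_le1 n1 n2 by auto
  have "a*k1 \<ge> 0" "c*k2 \<le> 0" using a c k by (simp_all add: mult_nonneg_nonpos)
  then have h: "0 \<le> d + c*k2 - a*k1" "d + c*k2 - a*k1 \<le> 1" using d e1 e2 by linarith+
  have "c*m2 \<le> 1" "a*m1 \<le> 1" using c a m m1le m2le by (simp_all add: mult_le_one)
  moreover have "c*m2 \<ge> 0" "a*m1 \<ge> 0" using a c m by simp_all
  ultimately have "\<bar>c*m2 - a*m1\<bar> \<le> 1" by linarith
  then have "(c*m2 - a*m1)^2 \<le> 1" using abs_le_square_iff[of "c*m2 - a*m1" 1] by simp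
  moreover have "(d + c*k2 - a*k1)^2 \<le> 1" using h by (rule sq_le1)
  ultimately show ?thesis by linarith
qed

lemma caseC:
  fixes d a c k1 m1 k2 m2 :: real
  assumes d: "0 < d" "d \<le> 1" and a: "0 < a" "a \<le> 1" and c: "0 \<le> c" "c \<le> 1"
    and n1: "k1^2 + m1^2 = 1" and n2: "k2^2 + m2^2 = 1" and m: "m1 \<ge> 0" "m2 \<ge> 0"
    and e1: "2*a*k1 \<le> d" "2*d*k1 \<le> a"
    and F1: "2*k1 - sqrt 3*k2 + m2 \<ge> 0" and F2: "-2*k2 + sqrt 3*k1 + m1 \<ge> 0"
    and k: "k1 > 0" "k2 \<ge> 0"
  shows "(d + c*k2 - a*k1)^2 + (c*m2 - a*m1)^2 \<le> 3"
proof -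
  have s3: "1 \<le> sqrt (3::real)" "sqrt (3::real) \<le> 2" by (rule sqrt3_bounds)+
  have m1le: "m1 \<le> 1" and m2le: "m2 \<le> 1" using m_le1 n1 n2 by auto
  have "(2*a*k1)*(2*d*k1) \<le> d*a" using e1 a d k by (intro mult_mono) auto
  then have "(a*d)*(4*k1^2) \<le> (a*d)*1" by (simp add: power2_eq_square algebra_simps)
  then have k1sq: "k1^2 \<le> 1/4" using a d by (simp add: mult_le_cancel_left_pos)
  have k1h: "k1 \<le> 1/2"
  proof -
    have "k1^2 \<le> (1/2)^2" using k1sq by (simp add: power2_eq_square)
    then show ?thesis by (rule power2_le_imp_le) simp
  qed
  have m1g: "m1 \<ge> sqrt 3 / 2" using m_ge n1 m k1sq by blast
  have m2g: "m2 \<ge> 1/2"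
  proof (rule ccontr)
    assume "\<not> m2 \<ge> 1/2"
    then have "m2 < 1/2" by simp
    then have "m2^2 < (1/2)^2" using m by (intro power_strict_mono) auto
    then have "(sqrt 3/2)^2 < k2^2" using n2 by (simp add: power_divide)
    then have "sqrt 3/2 < k2" using power2_less_imp_less k(2) by blast
    then have "sqrt 3 * (sqrt 3/2) < sqrt 3 * k2" using s3 by (intro mult_strict_left_mono) auto
    then have "3/2 < sqrt 3 * k2" by simp
    then show False using F1 k1h \<open>m2 < 1/2\<close> by linarith
  qed
  define C where "C = k1*k2 + m1*m2"
  have "m1*m2 \<ge> (sqrt 3/2)*(1/2)" using m1g m2g s3 m by (intro mult_mono) auto
  moreover have "k1*k2 \<ge> 0" using k by simp
  ultimately have Cg: "C \<ge> sqrt 3/4" unfolding C_def by linarith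
  have key1: "k2 - k1 \<le> C"
  proof -
    have "sqrt 3 * k1 \<le> 2 * k1" using s3 k by (intro mult_right_mono) auto
    moreover have "m1 * (1/2) \<le> m1 * m2" using m m2g by (intro mult_left_mono) auto
    moreover have "k1*k2 \<ge> 0" using k by simp
    ultimately show ?thesis using F2 unfolding C_def by linarith
  qed
  have key2: "2*k2 - 4*k1*C \<le> 1"
  proof -
    have "4*k1*C \<ge> 4*k1*(sqrt 3/4)" using Cg k by (intro mult_left_mono) auto
    then show ?thesis using F2 m1le by (simp add: algebra_simps)
  qed
  have V1: "(1 + k2 + 1*(-k1))^2 + (m2 + 1*(-m1))^2 \<le> 3"
  proof -
    have "(1 + k2 + 1*(-k1))^2 + (m2 + 1*(-m1))^2 = 3 + 2*(k2 - k1) - 2*C + (k2^2+m2^2-1) + (k1^2+m1^2-1)"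
      unfolding C_def by (simp add: power2_eq_square algebra_simps)
    then show ?thesis using key1 n1 n2 by simp
  qed
  have V2: "(1 + k2 + (2*k1)*(-k1))^2 + (m2 + (2*k1)*(-m1))^2 \<le> 3"
  proof -
    have "(1 + k2 + (2*k1)*(-k1))^2 + (m2 + (2*k1)*(-m1))^2 = 2 + 2*k2 - 4*k1*C + (k2^2+m2^2-1) + 4*k1^2*(k1^2+m1^2-1)"
      unfolding C_def by (simp add: power2_eq_square algebra_simps)
    then show ?thesis using key2 n1 n2 by simp
  qed
  have G0: "((k2 - a*k1) + 0*1)^2 + ((m2 - a*m1) + 0*0)^2 \<le> 3"
  proof -
    have "((k2 - a*k1) + 0*1)^2 + ((m2 - a*m1) + 0*0)^2 = 1 + a^2 - 2*a*C + (k2^2+m2^2-1) + a^2*(k1^2+m1^2-1)"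
      unfolding C_def by (simp add: power2_eq_square algebra_simps)
    moreover have "C \<ge> 0" using Cg s3 by linarith
    then have "a*C \<ge> 0" using a by simp
    moreover have "a^2 \<le> 1" using a by (simp add: power_le_one)
    ultimately show ?thesis using n1 n2 by simp
  qed
  define hh where "hh = min 1 (a/(2*k1))"
  have dhh: "d \<le> hh" unfolding hh_def using d e1 k by (simp add: field_simps)
  have Gh: "((k2 - a*k1) + hh*1)^2 + ((m2 - a*m1) + hh*0)^2 \<le> 3"
  proof (cases "a \<ge> 2*k1")
    case True
    then have "hh = 1" unfolding hh_def using k by (simp add: field_simps)
    have "((1+k2) + a*(-k1))^2 + (m2 + a*(-m1))^2 \<le> 3"
      by (rule sq_convex[where l="2*k1" and h=1]) (use True a V1 V2 in \<open>simp_all add: algebra_simps\<close>)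
    then show ?thesis using \<open>hh = 1\<close> by (simp add: algebra_simps)
  next
    case False
    then have "hh = a/(2*k1)" unfolding hh_def using k by (simp add: field_simps)
    have W: "(2*k1)*(1/(2*k1) - k1) = -(2*k1)*k1 + 1" using k by (simp add: field_simps)
    have "(k2 + a*(1/(2*k1) - k1))^2 + (m2 + a*(-m1))^2 \<le> 3"
    proof (rule sq_convex[where l=0 and h="2*k1"])
      show "(k2 + 0 * (1 / (2 * k1) - k1))\<^sup>2 + (m2 + 0 * - m1)\<^sup>2 \<le> 3" using n2 by simp
      show "(k2 + 2 * k1 * (1 / (2 * k1) - k1))\<^sup>2 + (m2 + 2 * k1 * - m1)\<^sup>2 \<le> 3"
        using V2 W by (simp add: algebra_simps)
    qed (use False a in auto)
    moreover have "a*(1/(2*k1) - k1) = a/(2*k1) - a*k1" by (simp add: algebra_simps)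
    ultimately show ?thesis using \<open>hh = a/(2*k1)\<close> by (simp add: algebra_simps)
  qed
  have G: "((k2 - a*k1) + d*1)^2 + ((m2 - a*m1) + d*0)^2 \<le> 3"
    by (rule sq_convex[where l=0 and h=hh, OF _ dhh G0 Gh]) (use d in auto)
  have Z0: "((d - a*k1) + 0*k2)^2 + ((-a*m1) + 0*m2)^2 \<le> 3"
  proof -
    have "((d - a*k1) + 0*k2)^2 + ((-a*m1) + 0*m2)^2 = d^2 + a^2 - 2*d*a*k1 + a^2*(k1^2+m1^2-1)"
      by (simp add: power2_eq_square algebra_simps)
    moreover have "d*a*k1 \<ge> 0" using a d k by simp
    moreover have "a^2 \<le> 1" "d^2 \<le> 1" using a d by (simp_all add: power_le_one)
    ultimately show ?thesis using n1 by simp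
  qed
  have Z1: "((d - a*k1) + 1*k2)^2 + ((-a*m1) + 1*m2)^2 \<le> 3"
    using G by (simp add: algebra_simps)
  have "((d - a*k1) + c*k2)^2 + ((-a*m1) + c*m2)^2 \<le> 3"
    by (rule sq_convex[where l=0 and h=1, OF _ _ Z0 Z1]) (use c in auto)
  then show ?thesis by (simp add: algebra_simps)
qed

lemma core1:
  fixes d a c k1 m1 k2 m2 :: real
  assumes d: "0 < d" "d \<le> 1" and a: "0 < a" "a \<le> 1" and c: "0 < c" "c \<le> 1"
    and n1: "k1^2 + m1^2 = 1" and n2: "k2^2 + m2^2 = 1" and m: "m1 \<ge> 0" "m2 \<ge> 0"
    and e1: "2*a*k1 \<le> d" "2*d*k1 \<le> a" and e2: "-2*c*k2 \<le> d" "-2*d*k2 \<le> c"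
    and F1: "2*k1 - sqrt 3*k2 + m2 \<ge> 0" and F2: "-2*k2 + sqrt 3*k1 + m1 \<ge> 0"
  shows "(d + c*k2 - a*k1)^2 + (c*m2 - a*m1)^2 \<le> 3"
proof -
  consider "k1 \<le> 0" "k2 \<ge> 0" | "k1 \<ge> 0" "k2 \<le> 0" | "k1 > 0" "k2 > 0" | "k1 < 0" "k2 < 0"
    by linarith
  then show ?thesis
  proof cases
    case 1 then show ?thesis using caseA[OF _ d(2) _ a(2) _ c(2) n1 n2 m F1 F2] d a c by auto
  next
    case 2 then show ?thesis using caseB[OF _ d(2) _ a(2) _ c(2) n1 n2 m e1(1) e2(1)] d a c by auto
  next
    case 3 then show ?thesis using caseC[OF d a _ c(2) n1 n2 m e1 F1 F2] c by auto
  next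
    case 4
    have "(d + a*(-k1) - c*(-k2))^2 + (a*m1 - c*m2)^2 \<le> 3"
      by (rule caseC[OF d c _ a(2)]) (use 4 n1 n2 m e2 F1 F2 a in auto)
    moreover have "(a*m1 - c*m2)^2 = (c*m2 - a*m1)^2" by (simp add: power2_commute)
    ultimately show ?thesis by (simp add: algebra_simps)
  qed
qed

lemma core:
  fixes M d a c k1 m1 k2 m2 :: real
  assumes d: "0 < d" "d \<le> M" and a: "0 < a" "a \<le> M" and c: "0 < c" "c \<le> M"
    and n1: "k1^2 + m1^2 = 1" and n2: "k2^2 + m2^2 = 1" and m: "m1 \<ge> 0" "m2 \<ge> 0"
    and e1: "2*a*k1 \<le> d" "2*d*k1 \<le> a" and e2: "-2*c*k2 \<le> d" "-2*d*k2 \<le> c"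
    and F1: "2*k1 - sqrt 3*k2 + m2 \<ge> 0" and F2: "-2*k2 + sqrt 3*k1 + m1 \<ge> 0"
  shows "(d + c*k2 - a*k1)^2 + (c*m2 - a*m1)^2 \<le> 3 * M^2"
proof -
  have M: "M > 0" using d by simp
  have "(d/M + (c/M)*k2 - (a/M)*k1)^2 + ((c/M)*m2 - (a/M)*m1)^2 \<le> 3"
  proof (rule core1[OF _ _ _ _ _ _ n1 n2 m])
    show "0 < d/M" "d/M \<le> 1" "0 < a/M" "a/M \<le> 1" "0 < c/M" "c/M \<le> 1" using d a c M by auto
    show "2 * (a / M) * k1 \<le> d / M" "2 * (d / M) * k1 \<le> a / M"
         "- 2 * (c / M) * k2 \<le> d / M" "- 2 * (d / M) * k2 \<le> c / M"
      using e1 e2 M by (auto simp: field_simps)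
  qed (use F1 F2 in auto)
  moreover have "d/M + (c/M)*k2 - (a/M)*k1 = (d + c*k2 - a*k1)/M" "(c/M)*m2 - (a/M)*m1 = (c*m2 - a*m1)/M"
    using M by (simp_all add: field_simps)
  ultimately have "((d + c*k2 - a*k1)^2 + (c*m2 - a*m1)^2)/M^2 \<le> 3"
    by (simp add: power_divide add_divide_distrib)
  then show ?thesis using M by (simp add: divide_le_eq)
qed

lemma angle_F:
  fixes x y :: real
  assumes "-1 \<le> x" "x \<le> 1" "-1 \<le> y" "y \<le> 1" "y \<le> 1/2"
    and "arccos x + arccos y \<le> 7*pi/6"
  shows "2*x + sqrt 3 * y + sqrt (1 - y^2) \<ge> 0"
proof -
  have g3: "arccos y \<ge> pi/3" using arccos_le_arccos[of y "1/2"] assms by simp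
  have gpi: "arccos y \<le> pi" using arccos_ubound assms by simp
  have "cos (7*pi/6 - arccos y) \<le> cos (arccos x)"
    by (rule cos_monotone_0_pi_le) (use assms g3 gpi arccos_lbound[of x] in auto)
  moreover have "cos (7*pi/6 - arccos y) = -(sqrt 3/2)*y - (1/2) * sqrt (1 - y^2)"
  proof -
    have e: "7*pi/6 = pi/6 + pi" by simp
    have "cos (7*pi/6) = - (sqrt 3/2)" "sin (7*pi/6) = -(1/2)"
      unfolding e cos_periodic_pi sin_periodic_pi cos_30 sin_30 by simp_all
    then show ?thesis using assms by (simp add: cos_diff sin_arccos)
  qed
  ultimately have "-(sqrt 3/2)*y - (1/2) * sqrt (1 - y^2) \<le> x" using assms by simp
  then show ?thesis by linarith
qed

lemma half_bound: fixes a d k :: real assumes "0 < a" "0 < d" "2*a*k \<le> d" "2*d*k \<le> a"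
  shows "k \<le> 1/2"
proof (cases "k \<le> 0")
  case False
  have "(2*a*k)*(2*d*k) \<le> d*a" using assms False by (intro mult_mono) auto
  then have "(a*d)*(4*k^2) \<le> (a*d)*1" by (simp add: power2_eq_square algebra_simps)
  then have "k^2 \<le> (1/2)^2" using assms by (simp add: mult_le_cancel_left_pos power2_eq_square)
  then show ?thesis by (rule power2_le_imp_le) simp
qed simp

lemma bridge:
  fixes E1 E2 S1 T1 S2 T2 M :: real
  assumes Y: "(E1*T1 - E2*S1) * (E1*T2 - E2*S2) > 0"
    and l1: "S1^2+T1^2 \<le> (S1-E1)^2+(T1-E2)^2" and l2: "E1^2+E2^2 \<le> (S1-E1)^2+(T1-E2)^2"
    and l3: "E1^2+E2^2 \<le> (E1+S2)^2+(E2+T2)^2" and l4: "S2^2+T2^2 \<le> (E1+S2)^2+(E2+T2)^2"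
    and ang: "arccos ((E1*S1 + E2*T1)/(sqrt(E1^2+E2^2) * sqrt(S1^2+T1^2)))
            + arccos (-(E1*S2 + E2*T2)/(sqrt(E1^2+E2^2) * sqrt(S2^2+T2^2))) \<le> 7*pi/6"
    and Md: "sqrt(E1^2+E2^2) \<le> M" and Ma: "sqrt(S1^2+T1^2) \<le> M" and Mc: "sqrt(S2^2+T2^2) \<le> M"
  shows "(S1-E1-S2)^2 + (T1-E2-T2)^2 \<le> 3*M^2"
proof -
  define d where "d = sqrt(E1^2+E2^2)"
  define a where "a = sqrt(S1^2+T1^2)"
  define c where "c = sqrt(S2^2+T2^2)"
  define X1 where "X1 = E1*S1 + E2*T1"
  define Y1 where "Y1 = E1*T1 - E2*S1"
  define X2 where "X2 = E1*S2 + E2*T2"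
  define Y2 where "Y2 = E1*T2 - E2*S2"
  have Y1nz: "Y1 \<noteq> 0" and Y2nz: "Y2 \<noteq> 0" using Y unfolding Y1_def Y2_def by auto
  have "E1^2 + E2^2 \<noteq> 0" using Y1nz unfolding Y1_def by auto
  then have "E1^2 + E2^2 > 0" using le_neq_trans[OF add_nonneg_nonneg[OF zero_le_power2[of E1] zero_le_power2[of E2]]] by metis
  then have dpos: "d > 0" unfolding d_def by simp
  have "S1^2 + T1^2 \<noteq> 0" using Y1nz unfolding Y1_def by auto
  then have "S1^2 + T1^2 > 0" using le_neq_trans[OF add_nonneg_nonneg[OF zero_le_power2[of S1] zero_le_power2[of T1]]] by metis
  then have apos: "a > 0" unfolding a_def by simp
  have "S2^2 + T2^2 \<noteq> 0" using Y2nz unfolding Y2_def by auto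
  then have "S2^2 + T2^2 > 0" using le_neq_trans[OF add_nonneg_nonneg[OF zero_le_power2[of S2] zero_le_power2[of T2]]] by metis
  then have cpos: "c > 0" unfolding c_def by simp
  have d2: "d^2 = E1^2+E2^2" unfolding d_def by simp
  have a2: "a^2 = S1^2+T1^2" unfolding a_def by simp
  have c2: "c^2 = S2^2+T2^2" unfolding c_def by simp
  define k1 where "k1 = X1/(d*a)"
  define m1 where "m1 = \<bar>Y1\<bar>/(d*a)"
  define k2 where "k2 = X2/(d*c)"
  define m2 where "m2 = \<bar>Y2\<bar>/(d*c)"
  have dak1: "d*a*k1 = X1" and dam1: "d*a*m1 = \<bar>Y1\<bar>" unfolding k1_def m1_def using dpos apos by auto
  have dck2: "d*c*k2 = X2" and dcm2: "d*c*m2 = \<bar>Y2\<bar>" unfolding k2_def m2_def using dpos cpos by auto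
  have id1: "X1^2 + Y1^2 = d^2*a^2" unfolding d2 a2 X1_def Y1_def by (simp add: power2_eq_square algebra_simps)
  have id2: "X2^2 + Y2^2 = d^2*c^2" unfolding d2 c2 X2_def Y2_def by (simp add: power2_eq_square algebra_simps)
  have n1: "k1^2 + m1^2 = 1"
  proof -
    have "(d*a)^2 * (k1^2 + m1^2) = (d*a*k1)^2 + (d*a*m1)^2" by (simp add: power2_eq_square algebra_simps)
    also have "\<dots> = (d*a)^2" using id1 unfolding dak1 dam1 by (simp add: power_mult_distrib)
    finally show ?thesis using dpos apos by simp
  qed
  have n2: "k2^2 + m2^2 = 1"
  proof -
    have "(d*c)^2 * (k2^2 + m2^2) = (d*c*k2)^2 + (d*c*m2)^2" by (simp add: power2_eq_square algebra_simps)
    also have "\<dots> = (d*c)^2" using id2 unfolding dck2 dcm2 by (simp add: power_mult_distrib)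
    finally show ?thesis using dpos cpos by simp
  qed
  have m: "m1 \<ge> 0" "m2 \<ge> 0" unfolding m1_def m2_def using dpos apos cpos by auto
  have x1: "2*X1 \<le> d^2" "2*X1 \<le> a^2" using l1 l2 unfolding d2 a2 X1_def by (simp_all add: power2_eq_square algebra_simps)
  have x2: "-2*X2 \<le> d^2" "-2*X2 \<le> c^2" using l3 l4 unfolding d2 c2 X2_def by (simp_all add: power2_eq_square algebra_simps)
  have e1: "2*a*k1 \<le> d" "2*d*k1 \<le> a"
  proof -
    have "d*(2*a*k1) \<le> d*d" using x1 dak1 by (simp add: power2_eq_square algebra_simps)
    then show "2*a*k1 \<le> d" using dpos by (rule mult_left_le_imp_le)
    have "a*(2*d*k1) \<le> a*a" using x1 dak1 by (simp add: power2_eq_square algebra_simps)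
    then show "2*d*k1 \<le> a" using apos by (rule mult_left_le_imp_le)
  qed
  have e2: "-2*c*k2 \<le> d" "-2*d*k2 \<le> c"
  proof -
    have "d*(-2*c*k2) \<le> d*d" using x2 dck2 by (simp add: power2_eq_square algebra_simps)
    then show "-2*c*k2 \<le> d" using dpos by (rule mult_left_le_imp_le)
    have "c*(-2*d*k2) \<le> c*c" using x2 dck2 by (simp add: power2_eq_square algebra_simps)
    then show "-2*d*k2 \<le> c" using cpos by (rule mult_left_le_imp_le)
  qed
  have k1b: "-1 \<le> k1" "k1 \<le> 1" "k1 \<le> 1/2" using m_le1[OF n1] half_bound[OF apos dpos e1] by auto
  have k2b: "-1 \<le> -k2" "-k2 \<le> 1" "-k2 \<le> 1/2" using m_le1[OF n2] half_bound[OF cpos dpos, of "-k2"] e2 by auto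
  have ang': "arccos k1 + arccos (-k2) \<le> 7*pi/6"
  proof -
    have "X1/(d*a) = k1" "-X2/(d*c) = -k2" unfolding k1_def k2_def by simp_all
    then show ?thesis using ang unfolding d_def a_def c_def X1_def X2_def by simp
  qed
  have "m1^2 = 1 - k1^2" using n1 by linarith
  from real_sqrt_unique[OF this m(1)] have sq1: "sqrt (1 - k1^2) = m1" .
  have "m2^2 = 1 - (-k2)^2" using n2 by simp
  from real_sqrt_unique[OF this m(2)] have sq2: "sqrt (1 - (-k2)^2) = m2" .
  have F1: "2*k1 - sqrt 3*k2 + m2 \<ge> 0" using angle_F[OF k1b(1,2) k2b ang'] sq2 by simp
  have F2: "-2*k2 + sqrt 3*k1 + m1 \<ge> 0" using angle_F[of "-k2" k1] k1b k2b ang' sq1 by (simp add: add.commute)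
  have main: "(d + c*k2 - a*k1)^2 + (c*m2 - a*m1)^2 \<le> 3*M^2"
    by (rule core[OF dpos _ apos _ cpos _ n1 n2 m e1 e2 F1 F2]) (use Md Ma Mc in \<open>simp_all add: d_def a_def c_def\<close>)
  have YY: "\<bar>Y1\<bar>*\<bar>Y2\<bar> = Y1*Y2" using Y unfolding Y1_def Y2_def by (simp add: abs_mult[symmetric])
  have L: "d^2 * ((d + c*k2 - a*k1)^2 + (c*m2 - a*m1)^2) =
     d^2*(d^2 + c^2*(k2^2+m2^2) + a^2*(k1^2+m1^2) + 2*(d*c*k2) - 2*(d*a*k1)) - 2*((d*a*k1)*(d*c*k2) + (d*a*m1)*(d*c*m2))"
    by (simp add: power2_eq_square algebra_simps)
  have R: "(E1^2+E2^2)*((S1-E1-S2)^2 + (T1-E2-T2)^2) = (E1^2+E2^2)*((E1^2+E2^2) + (S2^2+T2^2) + (S1^2+T1^2) + 2*X2 - 2*X1) - 2*(X1*X2 + Y1*Y2)"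
    unfolding X1_def X2_def Y1_def Y2_def by (simp add: power2_eq_square algebra_simps)
  have "d^2 * ((d + c*k2 - a*k1)^2 + (c*m2 - a*m1)^2) = d^2 * ((S1-E1-S2)^2 + (T1-E2-T2)^2)"
    using L R unfolding n1 n2 dak1 dam1 dck2 dcm2 YY d2[symmetric] a2[symmetric] c2[symmetric] by simp
  then have "(d + c*k2 - a*k1)^2 + (c*m2 - a*m1)^2 = (S1-E1-S2)^2 + (T1-E2-T2)^2" using dpos by simp
  then show ?thesis using main by simp
qed

lemma dist2: "dist (x::pt) y = sqrt ((x$1 - y$1)^2 + (x$2 - y$2)^2)"
  by (simp add: dist_vec_def L2_set_def sum_2 dist_real_def)
lemma norm2: "norm (x::pt) = sqrt ((x$1)^2 + (x$2)^2)"
  by (simp add: norm_vec_def L2_set_def sum_2)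
lemma inner2: "(x::pt) \<bullet> y = x$1*y$1 + x$2*y$2"
  by (simp add: inner_vec_def sum_2)

lemma geo:
  fixes p u v q :: pt and M :: real
  assumes ss: "same_side u v p q"
    and l1: "dist p u \<le> dist p v" and l2: "dist v u \<le> dist p v"
    and l3: "dist v u \<le> dist q u" and l4: "dist q v \<le> dist q u"
    and ang: "angle_deg p u v + angle_deg u v q \<le> 210"
    and Md: "dist v u \<le> M" and Ma: "dist p u \<le> M" and Mc: "dist q v \<le> M"
  shows "dist p q \<le> sqrt 3 * M"
proof -
  define E1 where "E1 = v$1 - u$1"
  define E2 where "E2 = v$2 - u$2"
  define S1 where "S1 = p$1 - u$1"
  define T1 where "T1 = p$2 - u$2"
  define S2 where "S2 = q$1 - v$1"
  define T2 where "T2 = q$2 - v$2"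
  have dvu: "dist v u = sqrt(E1^2+E2^2)" unfolding dist2 E1_def E2_def ..
  have dpu: "dist p u = sqrt(S1^2+T1^2)" unfolding dist2 S1_def T1_def ..
  have dqv: "dist q v = sqrt(S2^2+T2^2)" unfolding dist2 S2_def T2_def ..
  have "p$1 - v$1 = S1 - E1" "p$2 - v$2 = T1 - E2" unfolding S1_def E1_def T1_def E2_def by simp_all
  then have dpv: "dist p v = sqrt((S1-E1)^2+(T1-E2)^2)" unfolding dist2 by simp
  have "q$1 - u$1 = E1 + S2" "q$2 - u$2 = E2 + T2" unfolding S2_def E1_def T2_def E2_def by simp_all
  then have dqu: "dist q u = sqrt((E1+S2)^2+(E2+T2)^2)" unfolding dist2 by simp
  have "p$1 - q$1 = S1 - E1 - S2" "p$2 - q$2 = T1 - E2 - T2" unfolding S1_def E1_def T1_def E2_def S2_def T2_def by simp_all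
  then have dpq: "dist p q = sqrt((S1-E1-S2)^2+(T1-E2-T2)^2)" unfolding dist2 by simp
  have M0: "M \<ge> 0" using Md zero_le_dist[of v u] by linarith
  have "(S1-E1-S2)^2 + (T1-E2-T2)^2 \<le> 3*M^2"
  proof (rule bridge)
    show "(E1*T1 - E2*S1) * (E1*T2 - E2*S2) > 0" using ss
      unfolding same_side_def cross2_def E1_def E2_def S1_def T1_def S2_def T2_def
      by (simp add: algebra_simps)
    show "S1^2+T1^2 \<le> (S1-E1)^2+(T1-E2)^2" using l1 unfolding dpu dpv by simp
    show "E1^2+E2^2 \<le> (S1-E1)^2+(T1-E2)^2" using l2 unfolding dvu dpv by simp
    show "E1^2+E2^2 \<le> (E1+S2)^2+(E2+T2)^2" using l3 unfolding dvu dqu by simp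
    show "S2^2+T2^2 \<le> (E1+S2)^2+(E2+T2)^2" using l4 unfolding dqv dqu by simp
    show "sqrt(E1^2+E2^2) \<le> M" "sqrt(S1^2+T1^2) \<le> M" "sqrt(S2^2+T2^2) \<le> M"
      using Md Ma Mc unfolding dvu dpu dqv by simp_all
    have A1: "(p - u) \<bullet> (v - u) / (norm (p - u) * norm (v - u)) = (E1*S1 + E2*T1)/(sqrt(E1^2+E2^2) * sqrt(S1^2+T1^2))"
      unfolding inner2 norm2 E1_def E2_def S1_def T1_def by (simp add: algebra_simps)
    have A2: "(u - v) \<bullet> (q - v) / (norm (u - v) * norm (q - v)) = -(E1*S2 + E2*T2)/(sqrt(E1^2+E2^2) * sqrt(S2^2+T2^2))"
    proof -
      have "norm (u - v) = norm (v - u)" by (rule norm_minus_commute)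
      then show ?thesis unfolding inner2 norm2 E1_def E2_def S2_def T2_def by (simp add: algebra_simps)
    qed
    have "(arccos ((E1*S1 + E2*T1)/(sqrt(E1^2+E2^2) * sqrt(S1^2+T1^2)))
            + arccos (-(E1*S2 + E2*T2)/(sqrt(E1^2+E2^2) * sqrt(S2^2+T2^2)))) * (180/pi) \<le> 210"
      using ang unfolding angle_deg_def A1 A2 by (simp add: algebra_simps)
    then have "(arccos ((E1*S1 + E2*T1)/(sqrt(E1^2+E2^2) * sqrt(S1^2+T1^2)))
            + arccos (-(E1*S2 + E2*T2)/(sqrt(E1^2+E2^2) * sqrt(S2^2+T2^2)))) \<le> 210 * (pi/180)"
      by (simp add: field_simps)
    then show "arccos ((E1*S1 + E2*T1)/(sqrt(E1^2+E2^2) * sqrt(S1^2+T1^2)))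
            + arccos (-(E1*S2 + E2*T2)/(sqrt(E1^2+E2^2) * sqrt(S2^2+T2^2))) \<le> 7*pi/6" by simp
  qed
  then have "sqrt ((S1-E1-S2)^2 + (T1-E2-T2)^2) \<le> sqrt (3*M^2)" by (rule real_sqrt_le_mono)
  also have "\<dots> = sqrt 3 * M" using M0 by (simp add: real_sqrt_mult)
  finally show ?thesis unfolding dpq .
qed

lemma edge_len_eq: "edge_len {x, y} = dist x y"
  unfolding edge_len_def
proof (rule some_equality)
  show "\<exists>a b. {x, y} = {a, b} \<and> dist x y = dist a b" by blast
next
  fix d assume "\<exists>a b. {x, y} = {a, b} \<and> d = dist a b"
  then obtain a b where "{x, y} = {a, b}" "d = dist a b" by blast
  then show "d = dist x y" by (auto simp: doubleton_eq_iff dist_commute)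
qed

definition EP :: "pt set \<Rightarrow> pt set set" where
  "EP P = {{a, b} | a b. a \<in> P \<and> b \<in> P \<and> a \<noteq> b}"

lemma finite_EP: "finite P \<Longrightarrow> finite (EP P)"
proof -
  assume "finite P"
  moreover have "EP P \<subseteq> Pow P" unfolding EP_def by auto
  ultimately show ?thesis by (meson finite_Pow_iff finite_subset)
qed

lemma edge_len_nonneg: "e \<in> EP P \<Longrightarrow> edge_len e \<ge> 0"
  unfolding EP_def by (auto simp: edge_len_eq)

lemma adj_sym: "adj E x y = adj E y x"
  unfolding adj_def by (simp add: insert_commute)

lemma rtc_sym: "(adj E)\<^sup>*\<^sup>* x y \<Longrightarrow> (adj E)\<^sup>*\<^sup>* y x"
proof (induction rule: rtranclp_induct)
  case base then show ?case by simp
next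
  case (step y z)
  then have "adj E z y" using adj_sym by metis
  then show ?case using step.IH by (rule converse_rtranclp_into_rtranclp)
qed

lemma rtc_lift:
  assumes "(adj E)\<^sup>*\<^sup>* x y" and "\<And>a b. adj E a b \<Longrightarrow> (adj E')\<^sup>*\<^sup>* a b"
  shows "(adj E')\<^sup>*\<^sup>* x y"
  using assms(1)
proof (induction rule: rtranclp_induct)
  case base then show ?case by simp
next
  case (step y z)
  then show ?case using assms(2) rtranclp_trans by metis
qed

lemma cycle_conn:
  fixes vs :: "pt list"
  assumes n: "length vs \<ge> 3" and dist: "distinct vs"
    and cyc: "\<forall>i < length vs. {vs ! i, vs ! ((i + 1) mod length vs)} \<in> E"
  shows "(adj (E - {{vs!0, vs!1}}))\<^sup>*\<^sup>* (vs!0) (vs!1)"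
proof -
  let ?n = "length vs"
  let ?E = "E - {{vs!0, vs!1}}"
  have eq: "vs!i = vs!j \<longleftrightarrow> i = j" if "i < ?n" "j < ?n" for i j
    using dist that by (simp add: nth_eq_iff_index_eq)
  have path: "(adj ?E)\<^sup>*\<^sup>* (vs!1) (vs!j)" if "1 \<le> j" "j < ?n" for j
    using that
  proof (induction j)
    case 0 then show ?case by simp
  next
    case (Suc j)
    show ?case
    proof (cases "j = 0")
      case True then show ?thesis by simp
    next
      case False
      then have IH: "(adj ?E)\<^sup>*\<^sup>* (vs!1) (vs!j)" using Suc by simp
      have "(j + 1) mod ?n = j + 1" using Suc by simp
      then have inE: "{vs!j, vs!(Suc j)} \<in> E" using cyc Suc by (metis Suc_eq_plus1 Suc_lessD)
      have "{vs!j, vs!(Suc j)} \<noteq> {vs!0, vs!1}"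
      proof
        assume "{vs!j, vs!(Suc j)} = {vs!0, vs!1}"
        then have "vs!(Suc j) = vs!0 \<or> vs!(Suc j) = vs!1" by auto
        moreover have "Suc j < ?n" "0 < ?n" "1 < ?n" using Suc.prems n by auto
        moreover have "Suc j \<noteq> 0" "Suc j \<noteq> 1" using False by auto
        ultimately show False using eq by metis
      qed
      then have "adj ?E (vs!j) (vs!(Suc j))" using inE unfolding adj_def by simp
      then show ?thesis using IH by (meson rtranclp.rtrancl_into_rtrancl)
    qed
  qed
  have p1: "(adj ?E)\<^sup>*\<^sup>* (vs!1) (vs!(?n - 1))" using path[of "?n - 1"] n by simp
  have "?n - 1 + 1 = ?n" using n by simp
  then have "(?n - 1 + 1) mod ?n = 0" by simp
  then have inE: "{vs!(?n - 1), vs!0} \<in> E" using cyc[rule_format, of "?n - 1"] n by simp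
  have "{vs!(?n - 1), vs!0} \<noteq> {vs!0, vs!1}"
  proof
    assume "{vs!(?n - 1), vs!0} = {vs!0, vs!1}"
    then have "vs!(?n - 1) = vs!0 \<or> vs!(?n - 1) = vs!1" by auto
    moreover have "?n - 1 < ?n" "0 < ?n" "1 < ?n" "?n - 1 \<noteq> 0" "?n - 1 \<noteq> 1" using n by auto
    ultimately show False using eq by metis
  qed
  then have "adj ?E (vs!(?n - 1)) (vs!0)" using inE unfolding adj_def by simp
  with p1 have "(adj ?E)\<^sup>*\<^sup>* (vs!1) (vs!0)" by (rule rtranclp.rtrancl_into_rtrancl)
  then show ?thesis by (rule rtc_sym)
qed

lemma extract_tree:
  assumes "finite P" "E \<subseteq> EP P" "graph_connected_on P E"
  shows "\<exists>E' \<subseteq> E. is_spanning_tree P E'"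
  using assms(2,3)
proof (induction "card E" arbitrary: E rule: less_induct)
  case less
  have finE: "finite E" using less.prems finite_EP[OF assms(1)] finite_subset by blast
  show ?case
  proof (cases "has_cycle E")
    case False
    then show ?thesis using less.prems unfolding is_spanning_tree_def EP_def by blast
  next
    case True
    then obtain vs where n: "length vs \<ge> 3" and d: "distinct vs"
      and cyc: "\<forall>i < length vs. {vs ! i, vs ! ((i + 1) mod length vs)} \<in> E"
      unfolding has_cycle_def by blast
    let ?e = "{vs!0, vs!1}"
    have "1 mod length vs = 1" using n by simp
    moreover have "vs \<noteq> []" using n by auto
    ultimately have eE: "?e \<in> E" using cyc[rule_format, of 0] n by simp
    have c01: "(adj (E - {?e}))\<^sup>*\<^sup>* (vs!0) (vs!1)" by (rule cycle_conn[OF n d cyc])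
    have step: "(adj (E - {?e}))\<^sup>*\<^sup>* a b" if "adj E a b" for a b
    proof (cases "{a, b} = ?e")
      case True
      then have "(a = vs!0 \<and> b = vs!1) \<or> (a = vs!1 \<and> b = vs!0)" by (auto simp: doubleton_eq_iff)
      then show ?thesis using c01 rtc_sym by blast
    next
      case False
      then have "adj (E - {?e}) a b" using that unfolding adj_def by simp
      then show ?thesis by simp
    qed
    have conn: "graph_connected_on P (E - {?e})"
      using less.prems(2) unfolding graph_connected_on_def using rtc_lift step by blast
    have "card (E - {?e}) < card E" by (rule card_Diff1_less[OF finE eE])
    then obtain E' where "E' \<subseteq> E - {?e}" "is_spanning_tree P E'"
      using less.hyps[of "E - {?e}"] less.prems conn by blast
    then show ?thesis by blast
  qed
qed

lemma swap:
  assumes fin: "finite S" and emst: "is_EMST S T"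
    and ab: "{a, b} \<in> T" and bc: "{b, c} \<in> T" and ac: "a \<noteq> c"
  shows "dist a b \<le> dist a c"
proof -
  have st: "is_spanning_tree S T" and minT: "\<And>T'. is_spanning_tree S T' \<Longrightarrow> tree_weight T \<le> tree_weight T'"
    using emst unfolding is_EMST_def by auto
  have TS: "T \<subseteq> EP S" and connT: "graph_connected_on S T" using st unfolding is_spanning_tree_def EP_def by auto
  have finT: "finite T" using TS finite_EP[OF fin] finite_subset by blast
  have "{a, b} \<in> EP S" "{b, c} \<in> EP S" using ab bc TS by auto
  then have inS: "a \<in> S" "b \<in> S" "c \<in> S" unfolding EP_def by (auto simp: doubleton_eq_iff)
  define T' where "T' = insert {a, c} (T - {{a, b}})"
  have T'S: "T' \<subseteq> EP S" unfolding T'_def using TS inS ac unfolding EP_def by blast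
  have finT': "finite T'" unfolding T'_def using finT by simp
  have bcab: "{b, c} \<noteq> {a, b}" using ac by (auto simp: doubleton_eq_iff)
  have acT': "adj T' a c" and cbT': "adj T' c b" unfolding adj_def T'_def using bc bcab by (auto simp: insert_commute)
  have step: "(adj T')\<^sup>*\<^sup>* x y" if "adj T x y" for x y
  proof (cases "{x, y} = {a, b}")
    case True
    have ab': "(adj T')\<^sup>*\<^sup>* a b" using acT' cbT' by (meson rtranclp.rtrancl_into_rtrancl r_into_rtranclp)
    from True have "(x = a \<and> y = b) \<or> (x = b \<and> y = a)" by (auto simp: doubleton_eq_iff)
    then show ?thesis using ab' rtc_sym by blast
  next
    case False
    then have "adj T' x y" using that unfolding adj_def T'_def by simp
    then show ?thesis by simp
  qed
  have connT': "graph_connected_on S T'"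
    using connT unfolding graph_connected_on_def using rtc_lift step by blast
  obtain E'' where E'': "E'' \<subseteq> T'" "is_spanning_tree S E''" using extract_tree[OF fin T'S connT'] by blast
  have "tree_weight T \<le> tree_weight E''" using minT E''(2) .
  also have "tree_weight E'' \<le> tree_weight T'" unfolding tree_weight_def
    by (rule sum_mono2[OF finT' E''(1)]) (use T'S edge_len_nonneg in blast)
  also have "tree_weight T' \<le> tree_weight (T - {{a, b}}) + dist a c"
  proof (cases "{a, c} \<in> T - {{a, b}}")
    case True
    then have "T' = T - {{a, b}}" unfolding T'_def by blast
    then show ?thesis by simp
  next
    case False
    then show ?thesis unfolding T'_def tree_weight_def using finT by (simp add: edge_len_eq)
  qed
  also have "tree_weight T = dist a b + tree_weight (T - {{a, b}})"
    unfolding tree_weight_def using sum.remove[OF finT ab, of edge_len] by (simp add: edge_len_eq)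
  finally show ?thesis by simp
qed

theorem theorem2:
  fixes T :: "pt set set" and S :: "pt set" and p u v q :: pt
  assumes "finite S"
    and "is_EMST S T"
    and "{p, u} \<in> T" and "{u, v} \<in> T" and "{v, q} \<in> T"
    and "same_side u v p q"
    and "angle_deg p u v + angle_deg u v q \<le> 210"
  shows "dist p q \<le> sqrt 3 * Max {dist p u, dist u v, dist v q}"
proof -
  note fin = assms(1) and emst = assms(2) and pu = assms(3) and uv = assms(4) and vq = assms(5)
  have ss: "same_side u v p q" by fact
  have pv: "p \<noteq> v"
  proof
    assume "p = v"
    then show False using ss unfolding same_side_def cross2_def by (simp add: algebra_simps)
  qed
  have uq: "u \<noteq> q"
  proof
    assume "u = q"
    then show False using ss unfolding same_side_def cross2_def by simp
  qed
  have vu: "{v, u} \<in> T" and up: "{u, p} \<in> T" and qv: "{q, v} \<in> T"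
    using pu uv vq by (simp_all add: insert_commute)
  have l1: "dist p u \<le> dist p v" by (rule swap[OF fin emst pu uv pv])
  have "dist v u \<le> dist v p" by (rule swap[OF fin emst vu up pv[symmetric]])
  then have l2: "dist v u \<le> dist p v" by (simp add: dist_commute)
  have "dist u v \<le> dist u q" by (rule swap[OF fin emst uv vq uq])
  then have l3: "dist v u \<le> dist q u" by (simp add: dist_commute)
  have l4: "dist q v \<le> dist q u" by (rule swap[OF fin emst qv vu uq[symmetric]])
  let ?M = "Max {dist p u, dist u v, dist v q}"
  have Ma: "dist p u \<le> ?M" and "dist u v \<le> ?M" and "dist v q \<le> ?M" by (simp_all add: Max_ge_iff)
  then have Md: "dist v u \<le> ?M" and Mc: "dist q v \<le> ?M" by (simp_all add: dist_commute)
  show ?thesis by (rule geo[OF ss l1 l2 l3 l4 assms(7) Md Ma Mc])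
qed

end
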